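(* Let $(\lambda_n)_{n\ge1}$ be a sequence in $\mathbb{D}$ with $\sum_{n\ge1}(1-|\lambda_n|)=\infty$. Let $B_0=1$ and $B_n(z)=\prod_{k=1}^n\frac{\lambda_k-z}{1-\bar\lambda_kz}$ for $n\ge1$. Let $f$ be an entire function. Then \[ f=f(\lambda_1)+\sum_{n=1}^\infty\Big((T_{\bar B_n}f)(\lambda_{n+1})-\bar\lambda_n\,(T_{\bar B_{n-1}}f)(\lambda_n)\Big)B_n, \] where the series converges in $H^2$-norm.
   Context: $H^2$ is the Hardy space on the unit disc $\mathbb{D}$ (an entire function restricted to $\mathbb{D}$ belongs to $H^2$). For $\varphi\in L^\infty(\mathbb{T})$, $T_\varphi f=P_+(\varphi f)$ with $P_+$ the orthogonal projection $L^2(\mathbb{T})\to H^2$; $\bar B_n$ denotes the conjugate of the boundary function of $B_n$, so $(T_{\bar B_n}f)(\lambda)$ is the value at $\lambda\in\mathbb{D}$ of the $H^2$ function $T_{\bar B_n}f$. *)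

theory Defs
  imports "HOL-Analysis.Analysis"
begin

definition fourier_coeff :: "(complex \<Rightarrow> complex) \<Rightarrow> nat \<Rightarrow> complex" where
  "fourier_coeff g k = integral {0..2*pi} (\<lambda>t. g (cis t) * cis (- (real k * t))) / (2 * pi)"

text \<open>Riesz projection P_+ : L^2(T) to H^2, the result viewed as a function on the disc:
  (P_+ g)(z) = sum over k >= 0 of the k-th Fourier coefficient times z^k.\<close>
definition riesz_proj :: "(complex \<Rightarrow> complex) \<Rightarrow> complex \<Rightarrow> complex" where
  "riesz_proj g z = (\<Sum>k. fourier_coeff g k * z ^ k)"

definition toeplitz :: "(complex \<Rightarrow> complex) \<Rightarrow> (complex \<Rightarrow> complex) \<Rightarrow> complex \<Rightarrow> complex" where
  "toeplitz phi f = riesz_proj (\<lambda>w. phi w * f w)"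

text \<open>Taylor coefficients at 0 and the squared H^2 norm (sum of squared moduli of the Taylor
  coefficients), valued in ennreal so that it is infinite for functions outside H^2.\<close>
definition taylor_coeff :: "(complex \<Rightarrow> complex) \<Rightarrow> nat \<Rightarrow> complex" where
  "taylor_coeff g k = (deriv ^^ k) g 0 / fact k"

definition h2_norm_sq :: "(complex \<Rightarrow> complex) \<Rightarrow> ennreal" where
  "h2_norm_sq g = (\<Sum>k. ennreal ((cmod (taylor_coeff g k))\<^sup>2))"

definition blaschke :: "(nat \<Rightarrow> complex) \<Rightarrow> nat \<Rightarrow> complex \<Rightarrow> complex" where
  "blaschke lam n z = (\<Prod>k=1..n. (lam k - z) / (1 - cnj (lam k) * z))"

end

theory Submission
  imports Defs "HOL-Complex_Analysis.Complex_Analysis"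
begin

lemma int_suminf:
  fixes q :: "nat \<Rightarrow> real \<Rightarrow> complex"
  assumes M: "summable M" and bd: "\<And>i t. t \<in> {a..b} \<Longrightarrow> norm (q i t) \<le> M i"
    and cont: "\<And>i. continuous_on {a..b} (q i)"
  shows "((\<lambda>t. \<Sum>i. q i t) has_integral (\<Sum>i. integral {a..b} (q i))) {a..b}"
proof -
  have u: "uniform_limit {a..b} (\<lambda>n t. \<Sum>i<n. q i t) (\<lambda>t. \<Sum>i. q i t) sequentially"
    by (rule Weierstrass_m_test[OF bd M]) auto
  have c: "\<And>n. continuous_on {a..b} (\<lambda>t. \<Sum>i<n. q i t)"
    by (intro continuous_intros cont)
  obtain I J where I: "\<And>n. ((\<lambda>t. \<Sum>i<n. q i t) has_integral I n) {a..b}"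
     and J: "((\<lambda>t. \<Sum>i. q i t) has_integral J) {a..b}" and IJ: "I \<longlonglongrightarrow> J"
    using uniform_limit_integral[OF u c] by auto
  have qi: "\<And>i. ((q i) has_integral integral {a..b} (q i)) {a..b}"
    using cont integrable_continuous_interval by blast
  have "\<And>n. I n = (\<Sum>i<n. integral {a..b} (q i))"
  proof -
    fix n
    have "((\<lambda>t. \<Sum>i<n. q i t) has_integral (\<Sum>i<n. integral {a..b} (q i))) {a..b}"
      by (rule has_integral_sum) (use qi in auto)
    thus "I n = (\<Sum>i<n. integral {a..b} (q i))" using I has_integral_unique by blast
  qed
  hence "I = (\<lambda>n. \<Sum>i<n. integral {a..b} (q i))" by (rule ext)
  hence "(\<lambda>i. integral {a..b} (q i)) sums J" using IJ by (simp add: sums_def)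
  thus ?thesis using J sums_unique by metis
qed

lemma cis_int_integral:
  fixes m :: int
  shows "((\<lambda>t. cis (of_int m * t)) has_integral (if m = 0 then 2*pi else 0)) {0..2*pi}"
proof (cases "m = 0")
  case True
  then show ?thesis using has_integral_const_real[of "1::complex" 0 "2*pi"] by (simp add: scaleR_conv_of_real)
next
  case False
  define F where "F t = cis (of_int m * t) / (\<i> * of_int m)" for t
  have d: "(F has_vector_derivative cis (of_int m * t)) (at t within {0..2*pi})" for t
  proof -
    have "((\<lambda>t. exp (\<i> * of_int m * complex_of_real t) / (\<i> * of_int m)) has_vector_derivative
           exp (\<i> * of_int m * complex_of_real t) * (\<i> * of_int m) / (\<i> * of_int m)) (at t within {0..2*pi})"
      by (auto intro!: derivative_eq_intros has_vector_derivative_real_field simp: )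
    moreover have "F = (\<lambda>t. exp (\<i> * of_int m * complex_of_real t) / (\<i> * of_int m))"
      by (auto simp: F_def cis_conv_exp fun_eq_iff mult_ac)
    ultimately show ?thesis using False by (simp add: cis_conv_exp mult_ac)
  qed
  have "((\<lambda>t. cis (of_int m * t)) has_integral (F (2*pi) - F 0)) {0..2*pi}"
    by (rule fundamental_theorem_of_calculus) (use d in auto)
  moreover have "F (2*pi) = F 0"
  proof -
    have "cis (of_int m * (2*pi)) = 1" using cis_multiple_2pi[of "of_int m"] by (simp add: mult_ac)
    thus ?thesis by (simp add: F_def)
  qed
  ultimately show ?thesis using False by simp
qed

lemma powser_fourier:
  fixes c :: "nat \<Rightarrow> complex" and l :: int
  assumes sc: "summable (\<lambda>k. norm (c k))"
  shows "((\<lambda>t. (\<Sum>k. c k * cis (real k * t)) * cis (of_int l * t)) has_integral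
           (if l \<le> 0 then 2*pi * c (nat (-l)) else 0)) {0..2*pi}"
proof -
  define q where "q k t = c k * cis (real k * t) * cis (of_int l * t)" for k t
  have "((\<lambda>t. \<Sum>k. q k t) has_integral (\<Sum>k. integral {0..2*pi} (q k))) {0..2*pi}"
    by (rule int_suminf[OF sc]) (auto simp: q_def norm_mult intro!: continuous_intros)
  moreover have "(\<Sum>k. q k t) = (\<Sum>k. c k * cis (real k * t)) * cis (of_int l * t)" for t
  proof -
    have "summable (\<lambda>k. c k * cis (real k * t))"
      by (rule summable_norm_cancel) (use sc in \<open>simp add: norm_mult\<close>)
    thus ?thesis unfolding q_def by (rule suminf_mult2[symmetric])
  qed
  moreover have "integral {0..2*pi} (q k) = c k * (if int k + l = 0 then 2*pi else 0)" for k
  proof -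
    have "q k = (\<lambda>t. c k * cis (of_int (int k + l) * t))"
      by (auto simp: q_def fun_eq_iff cis_mult algebra_simps)
    thus ?thesis using cis_int_integral[of "int k + l"] has_integral_mult_right integral_unique by metis
  qed
  moreover have "(\<Sum>k. c k * (if int k + l = 0 then 2*pi else 0)) = (if l \<le> 0 then 2*pi * c (nat (-l)) else 0)"
  proof (cases "l \<le> 0")
    case True
    have "(\<lambda>k. c k * (if int k + l = 0 then 2*pi else 0)) = (\<lambda>k. if k = nat (-l) then 2*pi * c k else 0)"
      using True by (auto simp: fun_eq_iff)
    thus ?thesis using sums_single[of "nat (-l)" "\<lambda>k. 2*pi * c k"] True sums_unique by metis
  next
    case False
    hence "(\<lambda>k. c k * (if int k + l = 0 then 2*pi else 0)) = (\<lambda>k. 0)" by (auto simp: fun_eq_iff)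
    thus ?thesis using False by simp
  qed
  ultimately show ?thesis by simp
qed

lemma powser_parseval:
  fixes c :: "nat \<Rightarrow> complex"
  assumes sc: "summable (\<lambda>k. norm (c k))"
  shows "((\<lambda>t. (norm (\<Sum>k. c k * cis (real k * t)))^2) has_integral
           (2*pi * (\<Sum>k. (norm (c k))^2))) {0..2*pi}"
proof -
  define F where "F t = (\<Sum>k. c k * cis (real k * t))" for t
  have u: "uniform_limit {0..2*pi} (\<lambda>n t. \<Sum>k<n. c k * cis (real k * t)) F sequentially"
    unfolding F_def by (rule Weierstrass_m_test[OF _ sc]) (auto simp: norm_mult)
  have contF: "continuous_on {0..2*pi} F"
    by (rule uniform_limit_theorem[OF _ u]) (auto intro!: always_eventually continuous_intros)
  obtain MF where MF: "\<And>t. t \<in> {0..2*pi} \<Longrightarrow> norm (F t) \<le> MF"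
    using compact_imp_bounded[OF compact_continuous_image[OF contF compact_Icc]]
    unfolding bounded_iff by (metis atLeastAtMost_iff image_eqI)
  define q where "q k t = c k * cis (real k * t) * cnj (F t)" for k t
  have "((\<lambda>t. \<Sum>k. q k t) has_integral (\<Sum>k. integral {0..2*pi} (q k))) {0..2*pi}"
  proof (rule int_suminf[of "\<lambda>k. norm (c k) * MF"])
    show "summable (\<lambda>k. norm (c k) * MF)" using sc by (rule summable_mult2)
    show "norm (q i t) \<le> norm (c i) * MF" if "t \<in> {0..2*pi}" for i t
      using MF[OF that] by (auto simp: q_def norm_mult intro!: mult_left_mono)
    show "continuous_on {0..2*pi} (q i)" for i
    proof -
      have "continuous_on {0..2*pi} (\<lambda>t. cnj (F t))" using contF by (rule continuous_on_cnj)
      moreover have "continuous_on {0..2*pi} (\<lambda>t. c i * cis (real i * t))"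
        by (auto intro!: continuous_intros)
      ultimately show ?thesis unfolding q_def by (rule continuous_on_mult[of _ "\<lambda>t. c i * cis (real i * t)" "\<lambda>t. cnj (F t)", rotated])
    qed
  qed
  moreover have E1: "(\<Sum>k. q k t) = of_real ((norm (F t))^2)" for t
  proof -
    have "summable (\<lambda>k. c k * cis (real k * t))"
      by (rule summable_norm_cancel) (use sc in \<open>simp add: norm_mult\<close>)
    hence "(\<Sum>k. q k t) = F t * cnj (F t)" unfolding q_def F_def by (rule suminf_mult2[symmetric])
    thus ?thesis by (metis complex_norm_square)
  qed
  moreover have E2: "integral {0..2*pi} (q k) = complex_of_real (2*pi) * complex_of_real ((norm (c k))^2)" for k
  proof -
    have "((\<lambda>t. F t * cis (of_int (- int k) * t)) has_integral (2*pi * c k)) {0..2*pi}"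
      using powser_fourier[OF sc, of "- int k"] unfolding F_def by (simp del: of_int_minus)
    hence "(cnj \<circ> (\<lambda>t. F t * cis (of_int (- int k) * t)) has_integral cnj (2*pi * c k)) {0..2*pi}"
      by (subst has_integral_cnj)
    hence "((\<lambda>t. cnj (F t) * cis (real k * t)) has_integral (2*pi * cnj (c k))) {0..2*pi}"
      by (simp add: o_def cis_cnj)
    hence "((\<lambda>t. c k * (cnj (F t) * cis (real k * t))) has_integral c k * (2*pi * cnj (c k))) {0..2*pi}"
      by (rule has_integral_mult_right)
    moreover have "q k = (\<lambda>t. c k * (cnj (F t) * cis (real k * t)))"
      by (auto simp: q_def fun_eq_iff mult_ac)
    ultimately have "integral {0..2*pi} (q k) = c k * (2*pi * cnj (c k))"
      by (simp only: integral_unique)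
    also have "\<dots> = 2*pi * (c k * cnj (c k))" by (simp add: mult_ac)
    also have "c k * cnj (c k) = of_real ((norm (c k))^2)" by (rule complex_norm_square[symmetric])
    finally show ?thesis by simp
  qed
  ultimately have I: "((\<lambda>t. complex_of_real ((norm (F t))^2)) has_integral (\<Sum>k. complex_of_real (2*pi) * complex_of_real ((norm (c k))^2))) {0..2*pi}"
    by (simp only: E1 E2)
  have sq: "summable (\<lambda>k. (norm (c k))^2)"
  proof -
    have le: "norm (c k) \<le> (\<Sum>k. norm (c k))" for k
      using sum_le_suminf[OF sc, of "{k}"] by simp
    show ?thesis
    proof (rule summable_comparison_test[of _ "\<lambda>k. (\<Sum>k. norm (c k)) * norm (c k)"])
      show "\<exists>N. \<forall>n\<ge>N. norm ((norm (c n))\<^sup>2) \<le> (\<Sum>k. norm (c k)) * norm (c n)"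
        using le by (auto simp: power2_eq_square intro!: mult_right_mono)
      show "summable (\<lambda>k. (\<Sum>k. norm (c k)) * norm (c k))" using sc by (rule summable_mult)
    qed
  qed
  have "(\<Sum>k. complex_of_real (2*pi) * complex_of_real ((norm (c k))^2)) = of_real (2*pi * (\<Sum>k. (norm (c k))^2))"
  proof -
    have "(\<Sum>k. complex_of_real (2*pi) * complex_of_real ((norm (c k))^2)) = complex_of_real (2*pi) * (\<Sum>k. complex_of_real ((norm (c k))^2))"
      by (rule suminf_mult) (use sq in \<open>intro summable_of_real\<close>)
    also have "(\<Sum>k. complex_of_real ((norm (c k))^2)) = of_real (\<Sum>k. (norm (c k))^2)"
      by (rule suminf_of_real[OF sq, symmetric])
    finally show ?thesis by simp
  qed
  with I have I2: "((\<lambda>t. complex_of_real ((norm (F t))^2)) has_integral of_real (2*pi * (\<Sum>k. (norm (c k))^2))) {0..2*pi}"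
    by simp
  have "(\<lambda>t. (norm (F t))^2) integrable_on {0..2*pi}"
    by (rule integrable_continuous_interval, rule continuous_on_power, rule continuous_on_norm, rule contF)
  then obtain J where J: "((\<lambda>t. (norm (F t))^2) has_integral J) {0..2*pi}" by blast
  have "complex_of_real J = of_real (2*pi * (\<Sum>k. (norm (c k))^2))"
    using has_integral_unique[OF has_integral_of_real[OF J] I2] .
  hence "J = 2*pi * (\<Sum>k. (norm (c k))^2)" using of_real_eq_iff by blast
  thus ?thesis using J unfolding F_def by simp
qed

lemma taylor_abs:
  assumes hol: "g holomorphic_on ball 0 \<rho>" and s: "0 \<le> s" "s < \<rho>"
  shows "summable (\<lambda>k. norm (taylor_coeff g k) * s^k)"
proof -
  define r where "r = (s + \<rho>) / 2"
  have r: "s < r" "r < \<rho>" using s by (auto simp: r_def)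
  have "(\<lambda>n. (deriv ^^ n) g 0 / fact n * (complex_of_real r - 0)^n) sums g (of_real r)"
    by (rule holomorphic_power_series[OF hol]) (use r s in auto)
  hence sm: "summable (\<lambda>n. taylor_coeff g n * (complex_of_real r)^n)"
    by (auto simp: taylor_coeff_def sums_iff)
  have "summable (\<lambda>n. norm (taylor_coeff g n * (complex_of_real s)^n))"
    by (rule powser_insidea[OF sm]) (use r s in auto)
  thus ?thesis using s by (simp add: norm_mult norm_power)
qed

lemma taylor_circle:
  assumes hol: "g holomorphic_on ball 0 \<rho>" and r: "1 < \<rho>"
  shows "summable (\<lambda>k. norm (taylor_coeff g k))"
    and "g (cis t) = (\<Sum>k. taylor_coeff g k * cis (real k * t))"
proof -
  show "summable (\<lambda>k. norm (taylor_coeff g k))"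
    using taylor_abs[OF hol, of 1] r by simp
  have "(\<lambda>n. (deriv ^^ n) g 0 / fact n * (cis t - 0)^n) sums g (cis t)"
    by (rule holomorphic_power_series[OF hol]) (use r in auto)
  thus "g (cis t) = (\<Sum>k. taylor_coeff g k * cis (real k * t))"
    by (simp add: taylor_coeff_def sums_iff Complex.DeMoivre)
qed

lemma holo_fourier:
  assumes hol: "g holomorphic_on ball 0 \<rho>" and r: "1 < \<rho>"
  shows "((\<lambda>t. g (cis t) * cis (of_int l * t)) has_integral
           (if l \<le> 0 then 2*pi * taylor_coeff g (nat (-l)) else 0)) {0..2*pi}"
  using powser_fourier[OF taylor_circle(1)[OF hol r], of l] taylor_circle(2)[OF hol r] by simp

lemma holo_fourier_coeff:
  assumes hol: "g holomorphic_on ball 0 \<rho>" and r: "1 < \<rho>"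
  shows "fourier_coeff g k = taylor_coeff g k"
proof -
  have "((\<lambda>t. g (cis t) * cis (- (real k * t))) has_integral 2*pi * taylor_coeff g k) {0..2*pi}"
    using holo_fourier[OF hol r, of "- int k"] by simp
  thus ?thesis unfolding fourier_coeff_def by (simp add: integral_unique)
qed

lemma sq_summable:
  fixes c :: "nat \<Rightarrow> complex"
  assumes sc: "summable (\<lambda>k. norm (c k))"
  shows "summable (\<lambda>k. (norm (c k))^2)"
proof -
  have le: "norm (c k) \<le> (\<Sum>k. norm (c k))" for k
    using sum_le_suminf[OF sc, of "{k}"] by simp
  show ?thesis
  proof (rule summable_comparison_test[of _ "\<lambda>k. (\<Sum>k. norm (c k)) * norm (c k)"])
    show "\<exists>N. \<forall>n\<ge>N. norm ((norm (c n))\<^sup>2) \<le> (\<Sum>k. norm (c k)) * norm (c n)"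
      using le by (auto simp: power2_eq_square intro!: mult_right_mono)
    show "summable (\<lambda>k. (\<Sum>k. norm (c k)) * norm (c k))" using sc by (rule summable_mult)
  qed
qed

lemma holo_parseval:
  assumes hol: "g holomorphic_on ball 0 \<rho>" and r: "1 < \<rho>"
  shows "((\<lambda>t. (norm (g (cis t)))^2) has_integral (2*pi * (\<Sum>k. (norm (taylor_coeff g k))^2))) {0..2*pi}"
    and "summable (\<lambda>k. (norm (taylor_coeff g k))^2)"
  using powser_parseval[OF taylor_circle(1)[OF hol r]] taylor_circle(2)[OF hol r]
    sq_summable[OF taylor_circle(1)[OF hol r]] by simp_all

definition bf :: "complex \<Rightarrow> complex \<Rightarrow> complex" where
  "bf a w = (a - w) / (1 - cnj a * w)"

lemma bf_ident: "(norm (1 - cnj a * w))^2 - (norm (a - w))^2 = (1 - (norm a)^2) * (1 - (norm w)^2)"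
  unfolding cmod_power2 by (simp add: power2_eq_square algebra_simps)

lemma bf_denom: assumes "norm a * norm w < 1" shows "1 - cnj a * w \<noteq> 0"
proof
  assume "1 - cnj a * w = 0"
  hence "norm (cnj a * w) = 1" by (metis eq_iff_diff_eq_0 norm_one)
  thus False using assms by (simp add: norm_mult)
qed

lemma bf_circle: assumes a: "norm a < 1" and w: "norm w = 1" shows "norm (bf a w) = 1"
proof -
  have "1 - cnj a * w \<noteq> 0" using a w by (intro bf_denom) simp
  hence "norm (1 - cnj a * w) \<noteq> 0" by simp
  moreover have "(norm (1 - cnj a * w))^2 = (norm (a - w))^2" using bf_ident[of a w] w by simp
  hence "norm (1 - cnj a * w) = norm (a - w)" by (simp add: power2_eq_iff_nonneg)
  ultimately show ?thesis by (simp add: bf_def norm_divide)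
qed

lemma bf_small: assumes a: "norm a < 1" and w: "norm w \<le> 1/2"
  shows "norm (bf a w) \<le> exp (- (1 - norm a) / 6)"
proof -
  define x where "x = norm a"
  define y where "y = norm w"
  define D where "D = (norm (1 - cnj a * w))^2"
  define N where "N = (norm (a - w))^2"
  have x: "0 \<le> x" "x < 1" using a by (auto simp: x_def)
  have y: "0 \<le> y" "y \<le> 1/2" using w by (auto simp: y_def)
  have xy: "x * y \<le> 1/2" using mult_mono[of x 1 y "1/2"] x y by simp
  have nz: "1 - cnj a * w \<noteq> 0" using xy by (intro bf_denom) (auto simp: x_def y_def)
  hence Dpos: "D > 0" by (simp add: D_def)
  have "norm (1 - cnj a * w) \<le> 1 + x * y"
    using norm_triangle_ineq4[of 1 "cnj a * w"] by (simp add: x_def y_def norm_mult)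
  hence "D \<le> (1 + x*y)^2" unfolding D_def by (intro power_mono) auto
  also have "\<dots> \<le> (3/2)^2" using xy x y by (intro power_mono) auto
  finally have D: "D \<le> 9/4" by (simp add: power2_eq_square)
  have ND: "N = D - (1 - x^2) * (1 - y^2)" using bf_ident[of a w] by (simp add: D_def N_def x_def y_def)
  have "(1 - x^2) * (3/4) \<le> (1 - x^2) * (1 - y^2)"
  proof (rule mult_left_mono)
    show "3/4 \<le> 1 - y^2" using power_mono[OF y(2) y(1), of 2] by (simp add: power2_eq_square)
    show "0 \<le> 1 - x^2" using x by (simp add: abs_square_le_1)
  qed
  moreover have "D * (1 - x) / 3 \<le> (1 - x^2) * (3/4)"
  proof -
    have "D * (1 - x) / 3 \<le> (9/4) * (1 - x) / 3" using D x by (intro divide_right_mono mult_right_mono) auto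
    also have "\<dots> \<le> (1 - x^2) * (3/4)"
    proof -
      have xx: "x*x \<le> x" using mult_left_mono[of x 1 x] x by simp
      have "(9/4) * (1 - x) / 3 = (3/4) * (1 - x)" by simp
      also have "\<dots> \<le> (3/4) * (1 - x) + (3/4) * (x - x*x)" using xx by simp
      also have "\<dots> = (1 - x^2) * (3/4)" by (simp add: power2_eq_square field_simps)
      finally show ?thesis .
    qed
    finally show ?thesis .
  qed
  moreover have "D * (1 - (1 - x)/3) = D - D * (1 - x) / 3" by (simp add: algebra_simps)
  ultimately have "N \<le> D * (1 - (1 - x)/3)" using ND by linarith
  hence "N / D \<le> 1 - (1 - x)/3" using Dpos by (simp add: divide_le_eq mult.commute)
  also have "\<dots> \<le> exp (- (1 - x) / 3)"
  proof -
    have "1 + (- (1 - x) / 3) \<le> exp (- (1 - x) / 3)" by (rule exp_ge_add_one_self)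
    moreover have "1 + (- (1 - x) / 3) = 1 - (1 - x)/3" by (simp add: field_simps)
    ultimately show ?thesis by linarith
  qed
  also have "\<dots> = (exp (- (1 - x) / 6))^2" by (simp add: exp_double[symmetric] power2_eq_square exp_add[symmetric])
  finally have "(norm (bf a w))^2 \<le> (exp (- (1 - x) / 6))^2"
    by (simp add: bf_def norm_divide power_divide N_def D_def)
  thus ?thesis unfolding x_def by (rule power2_le_imp_le) simp
qed

lemma blaschke_bf: "blaschke lam n w = (\<Prod>k=1..n. bf (lam k) w)"
  by (simp add: blaschke_def bf_def)

lemma blaschke_0: "blaschke lam 0 w = 1"
  by (simp add: blaschke_def)

lemma blaschke_Suc: "blaschke lam (Suc n) w = blaschke lam n w * bf (lam (Suc n)) w"
  by (simp add: blaschke_bf)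

lemma blaschke_circle:
  assumes "\<And>k. k \<ge> 1 \<Longrightarrow> norm (lam k) < 1" and "norm w = 1"
  shows "norm (blaschke lam n w) = 1"
  by (induction n) (use assms in \<open>simp_all add: blaschke_0 blaschke_Suc norm_mult bf_circle\<close>)

lemma blaschke_small:
  assumes lam: "\<And>k. k \<ge> 1 \<Longrightarrow> norm (lam k) < 1" and w: "norm w \<le> 1/2"
  shows "norm (blaschke lam n w) \<le> exp (- (\<Sum>k=1..n. 1 - norm (lam k)) / 6)"
proof (induction n)
  case 0 thus ?case by (simp add: blaschke_0)
next
  case (Suc n)
  have "norm (blaschke lam (Suc n) w) = norm (blaschke lam n w) * norm (bf (lam (Suc n)) w)"
    by (simp add: blaschke_Suc norm_mult)
  also have "\<dots> \<le> exp (- (\<Sum>k=1..n. 1 - norm (lam k)) / 6) * exp (- (1 - norm (lam (Suc n))) / 6)"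
    by (rule mult_mono[OF Suc.IH bf_small]) (use lam w in auto)
  also have "\<dots> = exp (- (\<Sum>k=1..Suc n. 1 - norm (lam k)) / 6)"
    by (simp add: exp_add[symmetric] diff_divide_distrib add_divide_distrib)
  finally show ?case .
qed

lemma blaschke_holo:
  assumes "\<And>k. k \<in> {1..n} \<Longrightarrow> norm (lam k) * \<rho> \<le> 1"
  shows "blaschke lam n holomorphic_on ball 0 \<rho>"
proof -
  have "(\<lambda>w. \<Prod>k=1..n. bf (lam k) w) holomorphic_on ball 0 \<rho>"
  proof (rule holomorphic_on_prod)
    fix k assume k: "k \<in> {1..n}"
    have "1 - cnj (lam k) * w \<noteq> 0" if "w \<in> ball 0 \<rho>" for w
    proof (rule bf_denom)
      have nw: "norm w < \<rho>" using that by simp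
      show "norm (lam k) * norm w < 1"
      proof (cases "lam k = 0")
        case True thus ?thesis by simp
      next
        case False
        hence "norm (lam k) * norm w < norm (lam k) * \<rho>" using nw by simp
        thus ?thesis using assms[OF k] by linarith
      qed
    qed
    thus "bf (lam k) holomorphic_on ball 0 \<rho>"
      unfolding bf_def by (intro holomorphic_intros) auto
  qed
  moreover have "blaschke lam n = (\<lambda>w. \<Prod>k=1..n. bf (lam k) w)"
    by (simp add: fun_eq_iff blaschke_bf)
  ultimately show ?thesis by simp
qed

lemma radius_exists:
  fixes N :: nat
  assumes lam: "\<And>k. k \<ge> 1 \<Longrightarrow> norm (lam k) < 1"
  shows "\<exists>\<rho>>1. \<forall>k\<in>{1..N}. norm (lam k) * \<rho> \<le> 1"
proof (induction N)
  case 0 thus ?case by (intro exI[of _ 2]) auto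
next
  case (Suc N)
  then obtain \<rho> where r: "\<rho> > 1" "\<forall>k\<in>{1..N}. norm (lam k) * \<rho> \<le> 1" by blast
  define x where "x = norm (lam (Suc N))"
  have x: "0 \<le> x" "x < 1" using lam[of "Suc N"] by (auto simp: x_def)
  define \<rho>' where "\<rho>' = min \<rho> (2 / (1 + x))"
  have "\<rho>' > 1" using r x by (auto simp: \<rho>'_def field_simps)
  moreover have "norm (lam k) * \<rho>' \<le> 1" if k: "k \<in> {1..Suc N}" for k
  proof (cases "k = Suc N")
    case True
    have "x * \<rho>' \<le> x * (2 / (1 + x))" using x by (intro mult_left_mono) (auto simp: \<rho>'_def)
    also have "\<dots> \<le> 1" using x by (simp add: field_simps)
    finally show ?thesis using True by (simp add: x_def)
  next
    case False
    hence "k \<in> {1..N}" using k by auto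
    hence "norm (lam k) * \<rho> \<le> 1" using r by auto
    moreover have "norm (lam k) * \<rho>' \<le> norm (lam k) * \<rho>" by (intro mult_left_mono) (auto simp: \<rho>'_def)
    ultimately show ?thesis by linarith
  qed
  ultimately show ?case by blast
qed

lemma cont_circle:
  assumes "g holomorphic_on ball 0 \<rho>" "1 < \<rho>"
  shows "continuous_on {0..2*pi} (\<lambda>t. g (cis t))"
proof (rule continuous_on_compose2[of "ball 0 \<rho>" g])
  show "continuous_on (ball 0 \<rho>) g" using assms(1) by (rule holomorphic_on_imp_continuous_on)
  show "continuous_on {0..2*pi} cis" by (intro continuous_intros)
  show "cis ` {0..2*pi} \<subseteq> ball 0 \<rho>" using assms(2) by auto
qed

lemma bounded_circle:
  assumes "continuous_on {0..2*pi} (h :: real \<Rightarrow> complex)"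
  obtains M where "\<And>t. t \<in> {0..2*pi} \<Longrightarrow> norm (h t) \<le> M"
  using compact_imp_bounded[OF compact_continuous_image[OF assms compact_Icc]]
  unfolding bounded_iff by (metis image_eqI)

lemma taylor_small:
  assumes hB: "B holomorphic_on ball 0 \<rho>" "1 < \<rho>" and Bs: "\<And>w. norm w = 1/2 \<Longrightarrow> norm (B w) \<le> \<epsilon>"
  shows "norm (taylor_coeff B j) \<le> \<epsilon> * 2^j"
proof -
  have sub: "cball 0 (1/2) \<subseteq> ball (0::complex) \<rho>" using hB(2) by auto
  have "norm ((deriv ^^ j) B 0) \<le> fact j * \<epsilon> / (1/2)^j"
  proof (rule Cauchy_inequality)
    show "B holomorphic_on ball 0 (1/2)" using hB(1) sub ball_subset_cball by (metis holomorphic_on_subset order_trans)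
    show "continuous_on (cball 0 (1/2)) B" using holomorphic_on_imp_continuous_on[OF hB(1)] sub
      by (rule continuous_on_subset)
    show "norm (B x) \<le> \<epsilon>" if "norm (0 - x) = 1/2" for x using Bs that by simp
  qed simp
  thus ?thesis by (simp add: taylor_coeff_def norm_divide field_simps)
qed

lemma coeff_bound:
  assumes hB: "B holomorphic_on ball 0 \<rho>" "1 < \<rho>" and Bs: "\<And>w. norm w = 1/2 \<Longrightarrow> norm (B w) \<le> \<epsilon>"
    and hf: "f holomorphic_on UNIV"
  shows "norm (fourier_coeff (\<lambda>w. cnj (B w) * f w) k) \<le> \<epsilon> * (\<Sum>m. norm (taylor_coeff f m) * 2^m) / 2^k"
proof -
  define a where "a m = taylor_coeff f m" for m
  define A where "A = (\<Sum>m. norm (a m) * 2^m)"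
  have hf2: "f holomorphic_on ball 0 2" using hf by (rule holomorphic_on_subset) auto
  have hf3: "f holomorphic_on ball 0 3" using hf by (rule holomorphic_on_subset) auto
  have sA: "summable (\<lambda>m. norm (a m) * 2^m)" unfolding a_def by (rule taylor_abs[OF hf3]) auto
  have sa: "summable (\<lambda>m. norm (a m))" unfolding a_def by (rule taylor_circle(1)[OF hf2]) simp
  have fser: "f (cis t) = (\<Sum>m. a m * cis (real m * t))" for t
    unfolding a_def by (rule taylor_circle(2)[OF hf2]) simp
  have contB: "continuous_on {0..2*pi} (\<lambda>t. B (cis t))" by (rule cont_circle[OF hB])
  obtain MB where MB: "\<And>t. t \<in> {0..2*pi} \<Longrightarrow> norm (B (cis t)) \<le> MB"
    using bounded_circle[OF contB] by blast
  have "norm (B (1/2)) \<le> \<epsilon>" by (rule Bs) simp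
  hence \<epsilon>: "0 \<le> \<epsilon>" using norm_ge_zero[of "B (1/2)"] by linarith
  define q where "q m t = a m * cis (real m * t) * (cnj (B (cis t)) * cis (- (real k * t)))" for m t
  have int: "((\<lambda>t. \<Sum>m. q m t) has_integral (\<Sum>m. integral {0..2*pi} (q m))) {0..2*pi}"
  proof (rule int_suminf[of "\<lambda>m. norm (a m) * MB"])
    show "summable (\<lambda>m. norm (a m) * MB)" using sa by (rule summable_mult2)
    show "norm (q m t) \<le> norm (a m) * MB" if "t \<in> {0..2*pi}" for m t
      using MB[OF that] by (auto simp: q_def norm_mult intro!: mult_left_mono)
    show "continuous_on {0..2*pi} (q m)" for m
    proof -
      have "continuous_on {0..2*pi} (\<lambda>t. cnj (B (cis t)))" using contB by (rule continuous_on_cnj)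
      hence "continuous_on {0..2*pi} (\<lambda>t. cnj (B (cis t)) * cis (- (real k * t)))"
        by (rule continuous_on_mult) (intro continuous_intros)
      moreover have "continuous_on {0..2*pi} (\<lambda>t. a m * cis (real m * t))" by (intro continuous_intros)
      ultimately show ?thesis unfolding q_def
        by (rule continuous_on_mult[of _ "\<lambda>t. a m * cis (real m * t)", rotated])
    qed
  qed
  have sumq: "(\<Sum>m. q m t) = cnj (B (cis t)) * f (cis t) * cis (- (real k * t))" for t
  proof -
    have "summable (\<lambda>m. a m * cis (real m * t))"
      by (rule summable_norm_cancel) (use sa in \<open>simp add: norm_mult\<close>)
    hence "(\<Sum>m. q m t) = (\<Sum>m. a m * cis (real m * t)) * (cnj (B (cis t)) * cis (- (real k * t)))"
      unfolding q_def by (rule suminf_mult2[symmetric])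
    thus ?thesis by (simp add: fser mult_ac)
  qed
  have qb: "norm (integral {0..2*pi} (q m)) \<le> norm (a m) * 2^m * (2 * pi * \<epsilon> / 2^k)" for m
  proof -
    define l where "l = int k - int m"
    have I: "((\<lambda>t. B (cis t) * cis (of_int l * t)) has_integral
           (if l \<le> 0 then 2*pi * taylor_coeff B (nat (-l)) else 0)) {0..2*pi}"
      by (rule holo_fourier[OF hB])
    hence "(cnj \<circ> (\<lambda>t. B (cis t) * cis (of_int l * t)) has_integral
           cnj (if l \<le> 0 then 2*pi * taylor_coeff B (nat (-l)) else 0)) {0..2*pi}"
      by (subst has_integral_cnj)
    hence "((\<lambda>t. a m * (cnj (B (cis t) * cis (of_int l * t)))) has_integral
           a m * cnj (if l \<le> 0 then 2*pi * taylor_coeff B (nat (-l)) else 0)) {0..2*pi}"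
      unfolding o_def by (rule has_integral_mult_right)
    moreover have "q m = (\<lambda>t. a m * (cnj (B (cis t) * cis (of_int l * t))))"
      by (auto simp: q_def fun_eq_iff cis_cnj cis_mult l_def algebra_simps)
    ultimately have "integral {0..2*pi} (q m) = a m * cnj (if l \<le> 0 then 2*pi * taylor_coeff B (nat (-l)) else 0)"
      by (simp only: integral_unique)
    hence "norm (integral {0..2*pi} (q m)) = norm (a m) * (if l \<le> 0 then 2*pi * norm (taylor_coeff B (nat (-l))) else 0)"
      by (simp add: norm_mult)
    also have "\<dots> \<le> norm (a m) * 2^m * (2 * pi * \<epsilon> / 2^k)"
    proof (cases "l \<le> 0")
      case True
      hence mk: "m = k + nat (-l)" by (simp add: l_def)
      have "norm (taylor_coeff B (nat (-l))) \<le> \<epsilon> * 2 ^ nat (-l)" by (rule taylor_small[OF hB Bs])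
      hence "2*pi * norm (taylor_coeff B (nat (-l))) \<le> 2*pi * (\<epsilon> * 2 ^ nat (-l))" by simp
      also have "\<dots> = 2^m * (2 * pi * \<epsilon> / 2^k)" by (simp add: mk power_add)
      finally have "2*pi * norm (taylor_coeff B (nat (-l))) \<le> 2^m * (2 * pi * \<epsilon> / 2^k)" .
      hence "norm (a m) * (2*pi * norm (taylor_coeff B (nat (-l)))) \<le> norm (a m) * (2^m * (2 * pi * \<epsilon> / 2^k))"
        by (rule mult_left_mono) simp
      thus ?thesis using True by (simp only: mult.assoc if_True)
    next
      case False
      thus ?thesis using \<epsilon> by simp
    qed
    finally show ?thesis .
  qed
  have sq: "summable (\<lambda>m. norm (a m) * 2^m * (2 * pi * \<epsilon> / 2^k))" using sA by (rule summable_mult2)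
  have "norm (\<Sum>m. integral {0..2*pi} (q m)) \<le> (\<Sum>m. norm (a m) * 2^m * (2 * pi * \<epsilon> / 2^k))"
    by (rule norm_suminf_le[OF qb sq])
  also have "\<dots> = A * (2 * pi * \<epsilon> / 2^k)" unfolding A_def using sA by (rule suminf_mult2[symmetric])
  finally have nb: "norm (\<Sum>m. integral {0..2*pi} (q m)) \<le> A * (2 * pi * \<epsilon> / 2^k)" .
  have "fourier_coeff (\<lambda>w. cnj (B w) * f w) k = (\<Sum>m. integral {0..2*pi} (q m)) / (2*pi)"
    unfolding fourier_coeff_def using int sumq by (simp add: integral_unique)
  hence "norm (fourier_coeff (\<lambda>w. cnj (B w) * f w) k) = norm (\<Sum>m. integral {0..2*pi} (q m)) / (2*pi)"
    by (simp add: norm_divide)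
  also have "\<dots> \<le> A * (2 * pi * \<epsilon> / 2^k) / (2*pi)" using nb by (intro divide_right_mono) auto
  also have "\<dots> = \<epsilon> * A / 2^k" by simp
  finally show ?thesis unfolding A_def a_def .
qed

lemma fc_integral:
  assumes "continuous_on {0..2*pi} (\<lambda>t. \<phi> (cis t))"
  shows "((\<lambda>t. \<phi> (cis t) * cis (- (real n * t))) has_integral (2*pi * fourier_coeff \<phi> n)) {0..2*pi}"
proof -
  have "(\<lambda>t. \<phi> (cis t) * cis (- (real n * t))) integrable_on {0..2*pi}"
    by (rule integrable_continuous_interval) (intro continuous_on_mult assms continuous_intros)
  thus ?thesis unfolding fourier_coeff_def by (simp add: has_integral_integral)
qed

lemma shifted_bounds:
  fixes c :: "nat \<Rightarrow> complex" and a :: complex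
  assumes a: "norm a < 1" and cb: "\<And>k. norm (c k) \<le> C / 2^k"
  defines "u \<equiv> (\<lambda>k. \<Sum>j. a^j * c (k + j))"
  shows "\<And>k. summable (\<lambda>j. a^j * c (k + j))"
    and "\<And>k. norm (u k) \<le> 2 * C / 2^k"
    and "\<And>k. u k = c k + a * u (Suc k)"
proof -
  have C: "0 \<le> C" using order_trans[OF norm_ge_zero cb[of 0]] by simp
  have tb: "norm (a^j * c (k + j)) \<le> C / 2^k * (1/2)^j" for k j
  proof -
    have "norm (a^j * c (k + j)) \<le> 1 * (C / 2^(k+j))"
      unfolding norm_mult norm_power
      by (rule mult_mono) (use a cb in \<open>auto intro: power_le_one\<close>)
    also have "\<dots> = C / 2^k * (1/2)^j" by (simp add: power_add power_one_over)
    finally show ?thesis .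
  qed
  have sg: "summable (\<lambda>j. C / 2^k * (1/2::real)^j)" for k
    by (rule summable_mult) (simp add: summable_geometric)
  show sm: "summable (\<lambda>j. a^j * c (k + j))" for k
    by (rule summable_norm_cancel, rule summable_comparison_test[OF _ sg[of k]]) (use tb in auto)
  show "norm (u k) \<le> 2 * C / 2^k" for k
  proof -
    have "norm (u k) \<le> (\<Sum>j. C / 2^k * (1/2::real)^j)"
      unfolding u_def by (rule norm_suminf_le[OF tb sg])
    also have "\<dots> = C / 2^k * (\<Sum>j. (1/2::real)^j)" by (rule suminf_mult) (simp add: summable_geometric)
    also have "(\<Sum>j. (1/2::real)^j) = 2" using suminf_geometric[of "1/2::real"] by simp
    finally show ?thesis by (simp add: mult.commute)
  qed
  show "u k = c k + a * u (Suc k)" for k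
  proof -
    have "(\<Sum>j. a^(Suc j) * c (k + Suc j)) = u k - a^0 * c (k + 0)"
      unfolding u_def by (rule suminf_split_head[OF sm])
    moreover have "(\<Sum>j. a^(Suc j) * c (k + Suc j)) = a * u (Suc k)"
      unfolding u_def by (subst suminf_mult[OF sm, symmetric]) (simp add: mult_ac)
    ultimately have "u k - c k = a * u (Suc k)" by simp
    thus ?thesis by (simp add: algebra_simps)
  qed
qed

lemma fc_step:
  fixes \<phi> :: "complex \<Rightarrow> complex" and a :: complex
  assumes a: "norm a < 1" and cont: "continuous_on {0..2*pi} (\<lambda>t. \<phi> (cis t))"
    and cb: "\<And>k. norm (fourier_coeff \<phi> k) \<le> C / 2^k"
  shows "fourier_coeff (\<lambda>w. cnj (bf a w) * \<phi> w) k =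
     cnj a * (\<Sum>j. a^j * fourier_coeff \<phi> (k + j)) - (\<Sum>j. a^j * fourier_coeff \<phi> (Suc k + j))"
proof -
  define c where "c = fourier_coeff \<phi>"
  define u where "u = (\<lambda>k. \<Sum>j. a^j * c (k + j))"
  have sm: "\<And>k. summable (\<lambda>j. a^j * c (k + j))"
    using shifted_bounds(1)[OF a, of c C] cb by (simp add: c_def)
  obtain M where M: "\<And>t. t \<in> {0..2*pi} \<Longrightarrow> norm (\<phi> (cis t)) \<le> M"
    using bounded_circle[OF cont] by blast
  define q where "q j t = a^j * cis (- (real j * t)) * ((cnj a - cis (- t)) * \<phi> (cis t) * cis (- (real k * t)))" for j t
  have int: "((\<lambda>t. \<Sum>j. q j t) has_integral (\<Sum>j. integral {0..2*pi} (q j))) {0..2*pi}"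
  proof (rule int_suminf[of "\<lambda>j. norm a ^ j * (2 * M)"])
    show "summable (\<lambda>j. norm a ^ j * (2 * M))" using a by (intro summable_mult2 summable_geometric) simp
    show "norm (q j t) \<le> norm a ^ j * (2 * M)" if t: "t \<in> {0..2*pi}" for j t
    proof -
      have "norm (cnj a - cis (- t)) \<le> 2"
        using norm_triangle_ineq4[of "cnj a" "cis (-t)"] a by simp
      hence "norm (cnj a - cis (- t)) * norm (\<phi> (cis t)) \<le> 2 * M"
        by (rule mult_mono) (use M[OF t] in auto)
      thus ?thesis by (simp add: q_def norm_mult norm_power mult_left_mono)
    qed
    show "continuous_on {0..2*pi} (q j)" for j
    proof -
      have "continuous_on {0..2*pi} (\<lambda>t. (cnj a - cis (- t)) * \<phi> (cis t))"
        by (intro continuous_on_mult cont) (intro continuous_intros)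
      hence "continuous_on {0..2*pi} (\<lambda>t. (cnj a - cis (- t)) * \<phi> (cis t) * cis (- (real k * t)))"
        by (rule continuous_on_mult) (intro continuous_intros)
      moreover have "continuous_on {0..2*pi} (\<lambda>t. a^j * cis (- (real j * t)))" by (intro continuous_intros)
      ultimately show ?thesis unfolding q_def
        by (rule continuous_on_mult[of _ "\<lambda>t. a^j * cis (- (real j * t))", rotated])
    qed
  qed
  have sumq: "(\<Sum>j. q j t) = cnj (bf a (cis t)) * \<phi> (cis t) * cis (- (real k * t))" for t
  proof -
    have na: "norm (a * cis (- t)) < 1" using a by (simp add: norm_mult)
    have pw: "(a * cis (- t))^j = a^j * cis (- (real j * t))" for j
      by (simp add: power_mult_distrib Complex.DeMoivre)
    have geo: "(\<lambda>j. a^j * cis (- (real j * t))) sums (1 / (1 - a * cis (- t)))"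
      using geometric_sums[OF na] by (simp add: pw)
    have "cnj (bf a (cis t)) = (cnj a - cis (- t)) / (1 - a * cis (- t))"
      by (simp add: bf_def cis_cnj)
    hence "cnj (bf a (cis t)) * \<phi> (cis t) * cis (- (real k * t)) =
       (1 / (1 - a * cis (- t))) * ((cnj a - cis (- t)) * \<phi> (cis t) * cis (- (real k * t)))" by simp
    also have "\<dots> = (\<Sum>j. q j t)" unfolding q_def
      using sums_mult2[OF geo, of "(cnj a - cis (- t)) * \<phi> (cis t) * cis (- (real k * t))"]
      by (simp add: sums_iff)
    finally show ?thesis ..
  qed
  have iq: "integral {0..2*pi} (q j) = a^j * (cnj a * (2*pi * c (k + j)) - 2*pi * c (Suc k + j))" for j
  proof -
    have e1: "cis (- (real j * t)) * cis (- (real k * t)) = cis (- (real (k + j) * t))" for t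
      by (simp add: cis_mult algebra_simps)
    have e2: "cis (- (real j * t)) * cis (- t) * cis (- (real k * t)) = cis (- (real (Suc k + j) * t))" for t
      by (simp add: cis_mult algebra_simps)
    have "q j = (\<lambda>t. a^j * cnj a * (\<phi> (cis t) * cis (- (real (k + j) * t))) -
                     a^j * (\<phi> (cis t) * cis (- (real (Suc k + j) * t))))"
    proof
      fix t
      have "q j t = a^j * cnj a * (\<phi> (cis t) * (cis (- (real j * t)) * cis (- (real k * t)))) -
                     a^j * (\<phi> (cis t) * (cis (- (real j * t)) * cis (- t) * cis (- (real k * t))))"
        by (simp add: q_def algebra_simps)
      thus "q j t = a^j * cnj a * (\<phi> (cis t) * cis (- (real (k + j) * t))) -
                     a^j * (\<phi> (cis t) * cis (- (real (Suc k + j) * t)))"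
        by (simp only: e1 e2)
    qed
    moreover have "((\<lambda>t. a^j * cnj a * (\<phi> (cis t) * cis (- (real (k + j) * t))) -
                     a^j * (\<phi> (cis t) * cis (- (real (Suc k + j) * t)))) has_integral
          (a^j * cnj a * (2*pi * c (k + j)) - a^j * (2*pi * c (Suc k + j)))) {0..2*pi}"
      unfolding c_def by (intro has_integral_diff has_integral_mult_right fc_integral cont)
    ultimately show ?thesis by (simp add: integral_unique algebra_simps)
  qed
  have "(\<Sum>j. integral {0..2*pi} (q j)) = (\<Sum>j. 2*pi*cnj a * (a^j * c (k + j)) - 2*pi * (a^j * c (Suc k + j)))"
    unfolding iq by (simp add: algebra_simps)
  also have "\<dots> = (\<Sum>j. 2*pi*cnj a * (a^j * c (k + j))) - (\<Sum>j. 2*pi * (a^j * c (Suc k + j)))"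
    by (rule suminf_diff[symmetric]) (intro summable_mult sm)+
  also have "\<dots> = 2*pi*cnj a * u k - 2*pi * u (Suc k)"
    unfolding u_def using suminf_mult[OF sm[of k], of "2*pi*cnj a"] suminf_mult[OF sm[of "Suc k"], of "2*pi"]
    by simp
  finally have S: "(\<Sum>j. integral {0..2*pi} (q j)) = 2*pi * (cnj a * u k - u (Suc k))" by (simp add: algebra_simps)
  have "fourier_coeff (\<lambda>w. cnj (bf a w) * \<phi> w) k = (\<Sum>j. integral {0..2*pi} (q j)) / (2*pi)"
    unfolding fourier_coeff_def using int sumq by (simp add: integral_unique)
  also have "\<dots> = cnj a * u k - u (Suc k)" using S by simp
  finally show ?thesis by (simp add: u_def c_def)
qed

lemma summable_geo_bound:
  fixes x :: "nat \<Rightarrow> complex"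
  assumes "\<And>k. norm (x k) \<le> D / 2^k" and "norm z \<le> 1"
  shows "summable (\<lambda>k. x k * z^k)"
proof (rule summable_norm_cancel, rule summable_comparison_test)
  show "summable (\<lambda>k. D * (1/2::real)^k)" by (intro summable_mult summable_geometric) simp
  have "norm (x k * z^k) \<le> D * (1/2)^k" for k
  proof -
    have "norm (x k * z^k) \<le> (D / 2^k) * 1"
      unfolding norm_mult norm_power
      by (rule mult_mono) (use assms order_trans[OF norm_ge_zero assms(1)] in \<open>auto intro: power_le_one\<close>)
    thus ?thesis by (simp add: power_one_over)
  qed
  thus "\<exists>N. \<forall>n\<ge>N. norm (norm (x n * z ^ n)) \<le> D * (1 / 2) ^ n" by simp
qed

lemma rp_step:
  fixes \<phi> :: "complex \<Rightarrow> complex" and a :: complex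
  assumes a: "norm a < 1" and cont: "continuous_on {0..2*pi} (\<lambda>t. \<phi> (cis t))"
    and cb: "\<And>k. norm (fourier_coeff \<phi> k) \<le> C / 2^k" and z: "norm z \<le> 1"
  shows "(a - z) * (riesz_proj (\<lambda>w. cnj (bf a w) * \<phi> w) z - cnj a * riesz_proj \<phi> a) =
         (1 - cnj a * z) * (riesz_proj \<phi> z - riesz_proj \<phi> a)"
proof -
  define c where "c = fourier_coeff \<phi>"
  define u where "u = (\<lambda>k. \<Sum>j. a^j * c (k + j))"
  have cb': "\<And>k. norm (c k) \<le> C / 2^k" using cb by (simp add: c_def)
  have nu: "\<And>k. norm (u k) \<le> 2 * C / 2^k" using shifted_bounds(2)[OF a cb'] by (simp add: u_def)
  have rec: "\<And>k. u k = c k + a * u (Suc k)" unfolding u_def by (rule shifted_bounds(3)[OF a cb'])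
  have fc: "fourier_coeff (\<lambda>w. cnj (bf a w) * \<phi> w) k = cnj a * u k - u (Suc k)" for k
    using fc_step[OF a cont cb, of k] by (simp add: u_def c_def)
  have nu': "\<And>k. norm (u (Suc k)) \<le> 2 * C / 2^k"
  proof -
    fix k
    have "norm (u (Suc k)) \<le> 2 * C / 2^(Suc k)" by (rule nu)
    also have "\<dots> \<le> 2 * C / 2^k" using order_trans[OF norm_ge_zero nu[of 0]]
      by (intro divide_left_mono) auto
    finally show "norm (u (Suc k)) \<le> 2 * C / 2^k" .
  qed
  have sU: "summable (\<lambda>k. u k * z^k)" by (rule summable_geo_bound[OF nu z])
  have sU': "summable (\<lambda>k. u (Suc k) * z^k)" by (rule summable_geo_bound[OF nu' z])
  define U where "U = (\<Sum>k. u k * z^k)"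
  define U' where "U' = (\<Sum>k. u (Suc k) * z^k)"
  have "riesz_proj (\<lambda>w. cnj (bf a w) * \<phi> w) z = (\<Sum>k. cnj a * (u k * z^k) - u (Suc k) * z^k)"
    unfolding riesz_proj_def fc by (simp add: algebra_simps)
  also have "\<dots> = cnj a * U - U'"
    unfolding U_def U'_def using suminf_mult[OF sU, of "cnj a"]
    by (subst suminf_diff[symmetric]) (auto intro: summable_mult sU sU')
  finally have R1: "riesz_proj (\<lambda>w. cnj (bf a w) * \<phi> w) z = cnj a * U - U'" .
  have "riesz_proj \<phi> z = (\<Sum>k. u k * z^k - a * (u (Suc k) * z^k))"
    unfolding riesz_proj_def c_def[symmetric] by (subst rec) (simp add: algebra_simps)
  also have "\<dots> = U - a * U'"
    unfolding U_def U'_def using suminf_mult[OF sU', of a]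
    by (subst suminf_diff[symmetric]) (auto intro: summable_mult sU sU')
  finally have R2: "riesz_proj \<phi> z = U - a * U'" .
  have R3: "riesz_proj \<phi> a = u 0"
    unfolding riesz_proj_def u_def c_def by (simp add: mult.commute)
  have "(\<Sum>k. u (Suc k) * z^(Suc k)) = U - u 0 * z^0"
    unfolding U_def by (rule suminf_split_head[OF sU])
  moreover have "(\<Sum>k. u (Suc k) * z^(Suc k)) = z * U'"
    unfolding U'_def using suminf_mult[OF sU', of z] by (simp add: mult_ac)
  ultimately have "U - u 0 = z * U'" by simp
  hence UU: "U = u 0 + z * U'" by (simp add: algebra_simps)
  show ?thesis unfolding R1 R2 R3 UU by (simp add: algebra_simps)
qed

lemma eps_to_0:
  fixes lam :: "nat \<Rightarrow> complex"
  assumes lam: "\<And>n. n \<ge> 1 \<Longrightarrow> cmod (lam n) < 1"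
    and div: "(\<Sum>n. ennreal (1 - cmod (lam (Suc n)))) = \<infinity>"
  shows "(\<lambda>N. exp (- (\<Sum>k=1..N. 1 - norm (lam k)) / 6)) \<longlonglongrightarrow> 0"
proof -
  define g where "g n = 1 - cmod (lam (Suc n))" for n
  define S where "S N = (\<Sum>k=1..N. 1 - norm (lam k))" for N
  have g0: "0 \<le> g n" for n using lam[of "Suc n"] by (simp add: g_def)
  have SN: "S N = (\<Sum>i<N. g i)" for N unfolding S_def g_def by (rule sum_bounds_lt_plus1[symmetric])
  have ns: "\<not> summable g"
  proof
    assume "summable g"
    hence "(\<Sum>n. ennreal (g n)) = ennreal (\<Sum>n. g n)" using g0 by (intro suminf_ennreal2) auto
    thus False using div by (simp add: g_def)
  qed
  have unb: "\<exists>N. Z \<le> S N" for Z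
  proof (rule ccontr)
    assume "\<not> (\<exists>N. Z \<le> S N)"
    hence "\<And>n. (\<Sum>i<n. g i) \<le> Z" by (auto simp: SN not_le less_imp_le)
    hence "summable g" by (rule summableI_nonneg_bounded[OF g0])
    thus False using ns by simp
  qed
  have mono: "S M \<le> S N" if "M \<le> N" for M N
    unfolding SN using that g0 by (intro sum_mono2) auto
  have "filterlim (\<lambda>N. S N / 6) at_top sequentially"
    unfolding filterlim_at_top eventually_sequentially
  proof
    fix Z
    obtain N where "6 * Z \<le> S N" using unb by blast
    hence "\<forall>n\<ge>N. Z \<le> S n / 6" using mono[of N] by fastforce
    thus "\<exists>N. \<forall>n\<ge>N. Z \<le> S n / 6" by blast
  qed
  hence "filterlim (\<lambda>N. exp (S N / 6)) at_top sequentially"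
    by (rule filterlim_compose[OF exp_at_top])
  hence "(\<lambda>N. inverse (exp (S N / 6))) \<longlonglongrightarrow> 0" by (rule tendsto_inverse_0_at_top)
  moreover have "inverse (exp (S N / 6)) = exp (- S N / 6)" for N by (simp add: exp_minus)
  ultimately show ?thesis unfolding S_def by simp
qed

theorem corollary5p1:
  fixes lam :: "nat \<Rightarrow> complex" and f :: "complex \<Rightarrow> complex"
  assumes lam_disc: "\<And>n. n \<ge> 1 \<Longrightarrow> cmod (lam n) < 1"
    and lam_div: "(\<Sum>n. ennreal (1 - cmod (lam (Suc n)))) = \<infinity>"
    and f_entire: "f holomorphic_on UNIV"
  shows "(\<lambda>N. h2_norm_sq (\<lambda>z. f z - (f (lam 1) +
            (\<Sum>n=1..N. (toeplitz (\<lambda>w. cnj (blaschke lam n w)) f (lam (Suc n))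
                        - cnj (lam n) * toeplitz (\<lambda>w. cnj (blaschke lam (n - 1) w)) f (lam n))
                       * blaschke lam n z))))
         \<longlonglongrightarrow> 0"
proof -
  define \<Phi> where "\<Phi> n = (\<lambda>w. cnj (blaschke lam n w) * f w)" for n
  define G where "G n z = toeplitz (\<lambda>w. cnj (blaschke lam n w)) f z" for n z
  have G\<Phi>: "G n z = riesz_proj (\<Phi> n) z" for n z by (simp add: G_def \<Phi>_def toeplitz_def)
  define \<epsilon> where "\<epsilon> N = exp (- (\<Sum>k=1..N. 1 - norm (lam k)) / 6)" for N
  define A where "A = (\<Sum>m. norm (taylor_coeff f m) * 2^m)"
  have hf2: "f holomorphic_on ball 0 2" using f_entire by (rule holomorphic_on_subset) auto
  have hf3: "f holomorphic_on ball 0 3" using f_entire by (rule holomorphic_on_subset) auto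
  have sA: "summable (\<lambda>m. norm (taylor_coeff f m) * 2^m)" by (rule taylor_abs[OF hf3]) auto
  have A0: "0 \<le> A" unfolding A_def by (rule suminf_nonneg[OF sA]) simp
  have \<epsilon>0: "0 \<le> \<epsilon> N" for N by (simp add: \<epsilon>_def)
  have \<epsilon>mono: "\<epsilon> (Suc N) \<le> \<epsilon> N" for N
    using lam_disc[of "Suc N"] by (simp add: \<epsilon>_def)
  have holN: "\<exists>\<rho>>1. \<forall>n\<le>N. blaschke lam n holomorphic_on ball 0 \<rho>" for N
  proof -
    obtain \<rho> where r: "\<rho> > 1" "\<forall>k\<in>{1..N}. norm (lam k) * \<rho> \<le> 1"
      using radius_exists[where lam=lam and N=N, OF lam_disc] by blast
    have "blaschke lam n holomorphic_on ball 0 \<rho>" if "n \<le> N" for n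
      by (rule blaschke_holo) (use r that in auto)
    thus ?thesis using r(1) by blast
  qed
  have cb: "norm (fourier_coeff (\<Phi> n) k) \<le> \<epsilon> n * A / 2^k" for n k
  proof -
    obtain \<rho> where r: "\<rho> > 1" "blaschke lam n holomorphic_on ball 0 \<rho>" using holN[of n] by blast
    have "norm (fourier_coeff (\<lambda>w. cnj (blaschke lam n w) * f w) k) \<le> \<epsilon> n * A / 2^k"
      unfolding A_def
      by (rule coeff_bound[OF r(2) r(1) _ f_entire]) (unfold \<epsilon>_def, rule blaschke_small[where lam=lam, OF lam_disc], simp_all)
    thus ?thesis by (simp add: \<Phi>_def)
  qed
  have cont\<Phi>: "continuous_on {0..2*pi} (\<lambda>t. \<Phi> n (cis t))" for n
  proof -
    obtain \<rho> where r: "\<rho> > 1" "blaschke lam n holomorphic_on ball 0 \<rho>" using holN[of n] by blast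
    have "continuous_on {0..2*pi} (\<lambda>t. cnj (blaschke lam n (cis t)))"
      by (rule continuous_on_cnj, rule cont_circle[OF r(2) r(1)])
    moreover have "continuous_on {0..2*pi} (\<lambda>t. f (cis t))" by (rule cont_circle[OF hf2]) simp
    ultimately show ?thesis unfolding \<Phi>_def by (rule continuous_on_mult)
  qed
  have \<Phi>Suc: "\<Phi> (Suc n) = (\<lambda>w. cnj (bf (lam (Suc n)) w) * \<Phi> n w)" for n
    by (simp add: \<Phi>_def fun_eq_iff blaschke_Suc mult_ac)
  have step: "G n z - G n (lam (Suc n)) = bf (lam (Suc n)) z * (G (Suc n) z - cnj (lam (Suc n)) * G n (lam (Suc n)))"
    if z: "norm z \<le> 1" for n z
  proof -
    define a where "a = lam (Suc n)"
    have a: "norm a < 1" using lam_disc[of "Suc n"] by (simp add: a_def)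
    have E: "(a - z) * (G (Suc n) z - cnj a * G n a) = (1 - cnj a * z) * (G n z - G n a)"
      using rp_step[OF a cont\<Phi> cb z, of n] unfolding G\<Phi> \<Phi>Suc[of n, symmetric] a_def .
    have d: "1 - cnj a * z \<noteq> 0"
    proof (rule bf_denom)
      have "norm a * norm z \<le> norm a * 1" using z by (intro mult_left_mono) auto
      thus "norm a * norm z < 1" using a by linarith
    qed
    have "G n z - G n a = (a - z) * (G (Suc n) z - cnj a * G n a) / (1 - cnj a * z)"
      using E d by (simp add: field_simps)
    thus ?thesis by (simp add: a_def bf_def)
  qed
  have G0: "G 0 z = f z" if z: "norm z < 2" for z
  proof -
    have P0: "\<Phi> 0 = f" by (simp add: \<Phi>_def fun_eq_iff blaschke_0)
    have "(\<lambda>n. (deriv ^^ n) f 0 / fact n * (z - 0)^n) sums f z"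
      by (rule holomorphic_power_series[OF hf2]) (use z in simp)
    hence "(\<lambda>n. taylor_coeff f n * z^n) sums f z" by (simp add: taylor_coeff_def)
    moreover have "fourier_coeff f k = taylor_coeff f k" for k by (rule holo_fourier_coeff[OF hf2]) simp
    ultimately show ?thesis unfolding G\<Phi> P0 riesz_proj_def by (simp add: sums_iff)
  qed
  have lam1: "norm (lam 1) < 1" using lam_disc[of 1] by simp
  have tele: "f z - (f (lam 1) + (\<Sum>n=1..N. (G n (lam (Suc n)) - cnj (lam n) * G (n - 1) (lam n)) * blaschke lam n z))
      = blaschke lam (Suc N) z * (G (Suc N) z - cnj (lam (Suc N)) * G N (lam (Suc N)))"
    if z: "norm z \<le> 1" for N z
  proof (induction N)
    case 0
    have "f z - f (lam 1) = G 0 z - G 0 (lam (Suc 0))" using z lam1 by (simp add: G0)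
    also have "\<dots> = bf (lam (Suc 0)) z * (G (Suc 0) z - cnj (lam (Suc 0)) * G 0 (lam (Suc 0)))"
      by (rule step[OF z])
    finally show ?case by (simp add: blaschke_Suc blaschke_0)
  next
    case (Suc N)
    let ?c = "G (Suc N) (lam (Suc (Suc N))) - cnj (lam (Suc N)) * G N (lam (Suc N))"
    have "f z - (f (lam 1) + (\<Sum>n=1..Suc N. (G n (lam (Suc n)) - cnj (lam n) * G (n - 1) (lam n)) * blaschke lam n z))
       = (f z - (f (lam 1) + (\<Sum>n=1..N. (G n (lam (Suc n)) - cnj (lam n) * G (n - 1) (lam n)) * blaschke lam n z)))
         - ?c * blaschke lam (Suc N) z"
      by (simp add: algebra_simps)
    also have "\<dots> = blaschke lam (Suc N) z * (G (Suc N) z - G (Suc N) (lam (Suc (Suc N))))"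
      unfolding Suc.IH by (simp add: algebra_simps)
    also have "\<dots> = blaschke lam (Suc (Suc N)) z * (G (Suc (Suc N)) z - cnj (lam (Suc (Suc N))) * G (Suc N) (lam (Suc (Suc N))))"
      unfolding step[OF z] by (simp add: blaschke_Suc mult_ac)
    finally show ?case .
  qed
  define R where "R N = (\<lambda>z. f z - (f (lam 1) + (\<Sum>n=1..N. (G n (lam (Suc n)) - cnj (lam n) * G (n - 1) (lam n)) * blaschke lam n z)))" for N
  define s where "s N = (\<Sum>k. (norm (taylor_coeff (R N) k))^2)" for N
  have bnd: "h2_norm_sq (R N) = ennreal (s N) \<and> 0 \<le> s N \<and> s N \<le> 12 * A^2 * (\<epsilon> N)^2" for N
  proof -
    obtain \<rho> where r: "\<rho> > 1" "\<And>n. n \<le> N \<Longrightarrow> blaschke lam n holomorphic_on ball 0 \<rho>"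
      using holN[of N] by blast
    have holR: "R N holomorphic_on ball 0 \<rho>"
      unfolding R_def
      by (intro holomorphic_on_diff holomorphic_on_add holomorphic_on_sum holomorphic_on_mult holomorphic_on_const
            holomorphic_on_subset[OF f_entire] r(2)) auto
    have P1: "((\<lambda>t. (norm (R N (cis t)))^2) has_integral (2*pi * s N)) {0..2*pi}"
      unfolding s_def by (rule holo_parseval(1)[OF holR r(1)])
    have sR: "summable (\<lambda>k. (norm (taylor_coeff (R N) k))^2)" by (rule holo_parseval(2)[OF holR r(1)])
    define K where "K = cnj (lam (Suc N)) * G N (lam (Suc N))"
    define \<eta> where "\<eta> k = fourier_coeff (\<Phi> (Suc N)) k - (if k = 0 then K else 0)" for k
    have Hc: "(\<lambda>k. \<eta> k * cis (real k * t)) sums (G (Suc N) (cis t) - K)" for t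
    proof -
      have "summable (\<lambda>k. fourier_coeff (\<Phi> (Suc N)) k * (cis t)^k)"
        by (rule summable_geo_bound[OF cb]) simp
      hence s1: "(\<lambda>k. fourier_coeff (\<Phi> (Suc N)) k * cis (real k * t)) sums G (Suc N) (cis t)"
        unfolding G\<Phi> riesz_proj_def by (simp add: sums_iff Complex.DeMoivre)
      have s2: "(\<lambda>k. if k = 0 then K else 0) sums K" using sums_single[of 0 "\<lambda>_. K"] by simp
      have "(\<lambda>k. fourier_coeff (\<Phi> (Suc N)) k * cis (real k * t) - (if k = 0 then K else 0)) sums (G (Suc N) (cis t) - K)"
        by (rule sums_diff[OF s1 s2])
      moreover have "(\<lambda>k. fourier_coeff (\<Phi> (Suc N)) k * cis (real k * t) - (if k = 0 then K else 0)) = (\<lambda>k. \<eta> k * cis (real k * t))"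
        by (auto simp: \<eta>_def fun_eq_iff algebra_simps)
      ultimately show ?thesis by simp
    qed
    have Rc: "(norm (R N (cis t)))^2 = (norm (\<Sum>k. \<eta> k * cis (real k * t)))^2" for t
    proof -
      have "R N (cis t) = blaschke lam (Suc N) (cis t) * (G (Suc N) (cis t) - K)"
        unfolding R_def K_def by (rule tele) simp
      hence "norm (R N (cis t)) = norm (G (Suc N) (cis t) - K)"
        by (simp add: norm_mult blaschke_circle[where lam=lam, OF lam_disc])
      thus ?thesis using Hc[of t] by (simp add: sums_iff)
    qed
    define D where "D = \<epsilon> (Suc N) * A + norm K"
    have \<eta>b: "norm (\<eta> k) \<le> D / 2^k" for k
    proof (cases "k = 0")
      case True
      have "norm (\<eta> k) \<le> norm (fourier_coeff (\<Phi> (Suc N)) 0) + norm K"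
        using True norm_triangle_ineq4 by (simp add: \<eta>_def)
      also have "\<dots> \<le> \<epsilon> (Suc N) * A + norm K" using cb[of "Suc N" 0] by simp
      finally show ?thesis using True by (simp add: D_def)
    next
      case False
      hence "norm (\<eta> k) \<le> \<epsilon> (Suc N) * A / 2^k" using cb[of "Suc N" k] by (simp add: \<eta>_def)
      also have "\<dots> \<le> D / 2^k" unfolding D_def by (intro divide_right_mono) auto
      finally show ?thesis .
    qed
    have D0: "0 \<le> D" unfolding D_def using \<epsilon>0 A0 by simp
    have s\<eta>: "summable (\<lambda>k. norm (\<eta> k))"
    proof (rule summable_comparison_test[of _ "\<lambda>k. D * (1/2::real)^k"])
      show "summable (\<lambda>k. D * (1/2::real)^k)" by (intro summable_mult summable_geometric) simp
      show "\<exists>N. \<forall>n\<ge>N. norm (norm (\<eta> n)) \<le> D * (1 / 2) ^ n"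
        using \<eta>b by (simp add: power_one_over)
    qed
    have P2: "((\<lambda>t. (norm (\<Sum>k. \<eta> k * cis (real k * t)))^2) has_integral (2*pi * (\<Sum>k. (norm (\<eta> k))^2))) {0..2*pi}"
      by (rule powser_parseval[OF s\<eta>])
    have "2*pi * s N = 2*pi * (\<Sum>k. (norm (\<eta> k))^2)"
      using P1 P2 unfolding Rc by (rule has_integral_unique)
    hence sN: "s N = (\<Sum>k. (norm (\<eta> k))^2)" by simp
    have "(\<Sum>k. (norm (\<eta> k))^2) \<le> (\<Sum>k. D^2 * (1/4::real)^k)"
    proof (rule suminf_le)
      show "(norm (\<eta> k))^2 \<le> D^2 * (1/4::real)^k" for k
      proof -
        have "(norm (\<eta> k))^2 \<le> (D / 2^k)^2" by (rule power_mono[OF \<eta>b norm_ge_zero])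
        also have "\<dots> = D^2 * (1/4)^k"
        proof -
          have "(2::real)^k * 2^k = 4^k" by (simp add: power_mult_distrib[symmetric])
          thus ?thesis by (simp add: power_divide power_one_over power2_eq_square)
        qed
        finally show ?thesis .
      qed
      show "summable (\<lambda>k. (norm (\<eta> k))^2)" by (rule sq_summable[OF s\<eta>])
      show "summable (\<lambda>k. D^2 * (1/4::real)^k)" by (intro summable_mult summable_geometric) simp
    qed
    also have "\<dots> = D^2 * (\<Sum>k. (1/4::real)^k)" by (intro suminf_mult summable_geometric) simp
    also have "(\<Sum>k. (1/4::real)^k) = 4/3" using suminf_geometric[of "1/4::real"] by simp
    finally have s1: "s N \<le> D^2 * (4/3)" using sN by simp
    have GN: "norm (G N (lam (Suc N))) \<le> 2 * (\<epsilon> N * A)"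
    proof -
      have l: "norm (lam (Suc N)) \<le> 1" using lam_disc[of "Suc N"] by simp
      have tb: "norm (fourier_coeff (\<Phi> N) k * lam (Suc N) ^ k) \<le> \<epsilon> N * A * (1/2)^k" for k
      proof -
        have "norm (fourier_coeff (\<Phi> N) k * lam (Suc N) ^ k) \<le> (\<epsilon> N * A / 2^k) * 1"
          unfolding norm_mult norm_power
          by (rule mult_mono[OF cb]) (use l \<epsilon>0 A0 in \<open>auto intro: power_le_one\<close>)
        thus ?thesis by (simp add: power_one_over)
      qed
      have "norm (G N (lam (Suc N))) \<le> (\<Sum>k. \<epsilon> N * A * (1/2::real)^k)"
        unfolding G\<Phi> riesz_proj_def
        by (rule norm_suminf_le[OF tb]) (intro summable_mult summable_geometric, simp)
      also have "\<dots> = \<epsilon> N * A * (\<Sum>k. (1/2::real)^k)" by (intro suminf_mult summable_geometric) simp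
      also have "(\<Sum>k. (1/2::real)^k) = 2" using suminf_geometric[of "1/2::real"] by simp
      finally show ?thesis by simp
    qed
    have "norm K \<le> 2 * (\<epsilon> N * A)"
    proof -
      have "norm K = norm (lam (Suc N)) * norm (G N (lam (Suc N)))" by (simp add: K_def norm_mult)
      also have "\<dots> \<le> 1 * norm (G N (lam (Suc N)))"
        using lam_disc[of "Suc N"] by (intro mult_right_mono) auto
      finally show ?thesis using GN by simp
    qed
    moreover have "\<epsilon> (Suc N) * A \<le> \<epsilon> N * A" using \<epsilon>mono A0 by (intro mult_right_mono)
    ultimately have "D \<le> 3 * (\<epsilon> N * A)" unfolding D_def by simp
    hence "D^2 \<le> (3 * (\<epsilon> N * A))^2" using D0 by (intro power_mono)
    hence "s N \<le> (3 * (\<epsilon> N * A))^2 * (4/3)" using s1 by simp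
    hence le: "s N \<le> 12 * A^2 * (\<epsilon> N)^2" by (simp add: power_mult_distrib)
    have s0: "0 \<le> s N" unfolding s_def by (rule suminf_nonneg[OF sR]) simp
    have "h2_norm_sq (R N) = ennreal (s N)"
      unfolding h2_norm_sq_def s_def by (rule suminf_ennreal2[OF _ sR]) simp
    thus ?thesis using le s0 by simp
  qed
  have "(\<lambda>N. 12 * A^2 * (\<epsilon> N)^2) \<longlonglongrightarrow> 12 * A^2 * 0^2"
    unfolding \<epsilon>_def by (intro tendsto_intros eps_to_0[OF lam_disc lam_div])
  hence "s \<longlonglongrightarrow> 0"
    by (intro tendsto_sandwich[of "\<lambda>_. 0" s _ "\<lambda>N. 12 * A^2 * (\<epsilon> N)^2"]) (use bnd in auto)
  hence "(\<lambda>N. ennreal (s N)) \<longlonglongrightarrow> ennreal 0" by (rule tendsto_ennrealI)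
  hence "(\<lambda>N. h2_norm_sq (R N)) \<longlonglongrightarrow> 0" using bnd by simp
  thus ?thesis unfolding R_def G_def .
qed

end
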